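(* Let $V$ be a vector space over a field $F$, let $T:V\to V$ (not necessarily linear) have a vanishing polynomial of degree $m$, and let $T_1:V\to V$ satisfy $T_1^l=T^k$ for integers $k\ge0$, $l\ge1$. Then $T_1$ has a vanishing polynomial of degree at most $ml$.
   Context: For $T:V\to V$ (not necessarily linear), $T^0=I$, $T^i=T\circ T^{i-1}$, and $p(T)(v)=\sum a_iT^i(v)$ for $p(x)=\sum a_ix^i$. A vanishing polynomial of $T$ is a nonzero $p\in F[x]$ with $p(T)(v)=0$ for all $v\in V$. *)

theory Defs
  imports Main "HOL-Computational_Algebra.Polynomial"
begin

definition poly_apply :: "('f::field \<Rightarrow> 'v::ab_group_add \<Rightarrow> 'v) \<Rightarrow> 'f poly \<Rightarrow> ('v \<Rightarrow> 'v) \<Rightarrow> 'v \<Rightarrow> 'v" where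
  "poly_apply scale p T v = (\<Sum>i\<le>degree p. scale (coeff p i) ((T ^^ i) v))"

definition vanishing_poly :: "('f::field \<Rightarrow> 'v::ab_group_add \<Rightarrow> 'v) \<Rightarrow> ('v \<Rightarrow> 'v) \<Rightarrow> 'f poly \<Rightarrow> bool" where
  "vanishing_poly scale T p \<longleftrightarrow> p \<noteq> 0 \<and> (\<forall>v. poly_apply scale p T v = 0)"

end

theory Submission
  imports Defs
begin

lemma pa_zero: "poly_apply scale 0 T v = scale 0 v"
  by (simp add: poly_apply_def)

context
  fixes scale :: "'f::field \<Rightarrow> 'v::ab_group_add \<Rightarrow> 'v"
  assumes vs: "vector_space scale"
begin

interpretation V: vector_space scale by (rule vs)

lemma pa_bound:
  assumes d: "degree p \<le> N"
  shows "poly_apply scale p T v = (\<Sum>i\<le>N. scale (coeff p i) ((T ^^ i) v))"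
  unfolding poly_apply_def
proof (rule sum.mono_neutral_left)
  show "\<forall>i\<in>{..N} - {..degree p}. scale (coeff p i) ((T ^^ i) v) = 0"
    using V.scale_zero_left by (auto simp: coeff_eq_0)
qed (use d in auto)

lemma pa_add:
  shows "poly_apply scale (p + q) T v = poly_apply scale p T v + poly_apply scale q T v"
proof -
  let ?N = "max (degree p) (degree q)"
  have "degree (p+q) \<le> ?N" by (rule degree_add_le) auto
  then show ?thesis
    by (simp add: pa_bound[of _ ?N] coeff_add V.scale_left_distrib sum.distrib)
qed

lemma pa_smult:
  shows "poly_apply scale (smult a p) T v = scale a (poly_apply scale p T v)"
proof -
  have "degree (smult a p) \<le> degree p" by (rule degree_smult_le)
  then show ?thesis
    by (simp add: pa_bound[of _ "degree p"] V.scale_sum_right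
        V.scale_scale)
qed

lemma pa_zero':
  shows "poly_apply scale 0 T v = 0"
  by (simp add: pa_zero V.scale_zero_left)

lemma pa_pCons:
  shows "poly_apply scale (pCons a r) T v = scale a v + poly_apply scale r T (T v)"
proof -
  have "degree (pCons a r) \<le> Suc (degree r)" by simp
  then have "poly_apply scale (pCons a r) T v = (\<Sum>i\<le>Suc (degree r). scale (coeff (pCons a r) i) ((T ^^ i) v))"
    by (rule pa_bound)
  also have "\<dots> = scale a v + (\<Sum>i\<le>degree r. scale (coeff r i) ((T ^^ Suc i) v))"
    by (subst sum.atMost_Suc_shift) simp
  also have "(\<Sum>i\<le>degree r. scale (coeff r i) ((T ^^ Suc i) v)) = poly_apply scale r T (T v)"
    by (simp add: poly_apply_def funpow_Suc_right del: funpow.simps)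
  finally show ?thesis .
qed

lemma pa_sum:
  assumes "finite A"
  shows "poly_apply scale (\<Sum>i\<in>A. f i) T v = (\<Sum>i\<in>A. poly_apply scale (f i) T v)"
  using assms(1) by (induction A rule: finite_induct) (auto simp: pa_zero' pa_add)

lemma pa_monom:
  shows "poly_apply scale (monom 1 n) T v = (T ^^ n) v"
proof -
  have "degree (monom (1::'a::field) n) \<le> n" by (simp add: degree_monom_le)
  then have "poly_apply scale (monom 1 n) T v = (\<Sum>i\<le>n. scale (coeff (monom 1 n) i) ((T ^^ i) v))"
    by (rule pa_bound)
  also have "\<dots> = (\<Sum>i\<le>n. if i = n then (T ^^ n) v else 0)"
    by (rule sum.cong) (auto simp: coeff_monom V.scale_zero_left
          V.scale_one)
  finally show ?thesis by simp
qed

lemma pa_mult: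
  assumes z: "\<And>v. poly_apply scale p T v = 0"
  shows "poly_apply scale (p * s) T v = 0"
proof (induction s arbitrary: v rule: pCons_induct)
  case 0 then show ?case by (simp add: pa_zero')
next
  case (pCons a s)
  have "p * pCons a s = smult a p + pCons 0 (p * s)" by (simp add: algebra_simps)
  then show ?case
    using pCons by (simp add: pa_add pa_smult pa_pCons z
        V.scale_zero_left V.scale_zero_right)
qed

lemma pa_mod:
  assumes z: "\<And>v. poly_apply scale p T v = 0"
  shows "poly_apply scale (f mod p) T v = poly_apply scale f T v"
proof -
  have "f = p * (f div p) + f mod p" by simp
  then have "poly_apply scale f T v = poly_apply scale (p * (f div p)) T v + poly_apply scale (f mod p) T v"
    by (metis pa_add)
  then show ?thesis using pa_mult[OF z] by simp
qed

end

lemma lin_dep: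
  fixes r :: "nat \<Rightarrow> 'f::field poly"
  assumes "\<And>i j. j \<ge> m \<Longrightarrow> coeff (r i) j = 0"
  shows "\<exists>c. (\<exists>i\<le>m. c i \<noteq> 0) \<and> (\<Sum>i\<le>m. smult (c i) (r i)) = 0"
proof -
  interpret V: vector_space "smult :: 'f \<Rightarrow> 'f poly \<Rightarrow> 'f poly"
    by unfold_locales (auto simp: smult_add_right smult_add_left)
  show ?thesis
  proof (cases "inj_on r {..m}")
    case True
    let ?S = "r ` {..m}"
    let ?B = "(\<lambda>j. monom (1::'f) j) ` {..<m}"
    have sp: "?S \<subseteq> V.span ?B"
    proof
      fix x assume "x \<in> ?S"
      then obtain i where x: "x = r i" by auto
      have "x = (\<Sum>j<m. smult (coeff x j) (monom 1 j))"
      proof (rule poly_eqI)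
        fix n
        show "coeff x n = coeff (\<Sum>j<m. smult (coeff x j) (monom 1 j)) n"
        proof -
          have "(\<Sum>j<m. coeff x j * (if j = n then 1 else 0)) = (\<Sum>j<m. if j = n then coeff x j else 0)"
            by (intro sum.cong) auto
          then show ?thesis
            using assms[of n i] by (auto simp: coeff_sum coeff_monom x not_less)
        qed
      qed
      also have "\<dots> \<in> V.span ?B"
        by (intro V.span_sum V.span_scale V.span_base) auto
      finally show "x \<in> V.span ?B" .
    qed
    have cS: "card ?S = Suc m" using True by (simp add: card_image)
    have cB: "card ?B \<le> m" using card_image_le[of "{..<m}" "\<lambda>j. monom 1 j"] by simp
    have "V.dependent ?S"
    proof (rule ccontr)
      assume ind: "\<not> V.dependent ?S"
      have "card ?S \<le> card ?B" using V.independent_span_bound[OF _ ind sp] by simp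
      then show False using cS cB by linarith
    qed
    then obtain u where u: "\<exists>v\<in>?S. u v \<noteq> 0" "(\<Sum>v\<in>?S. smult (u v) v) = 0"
      using V.dependent_finite by auto
    show ?thesis
      apply (rule exI[of _ "\<lambda>i. u (r i)"])
      using u sum.reindex[OF True, of "\<lambda>v. smult (u v) v"] by auto
  next
    case False
    then obtain i j where ij: "i \<le> m" "j \<le> m" "i \<noteq> j" "r i = r j"
      unfolding inj_on_def by auto
    let ?c = "\<lambda>x. if x = i then 1 else if x = j then -1 else (0::'f)"
    have "(\<Sum>x\<le>m. smult (?c x) (r x)) = (\<Sum>x\<in>{i,j}. smult (?c x) (r x))"
      by (rule sum.mono_neutral_right) (use ij in auto)
    also have "\<dots> = 0" using ij by simp
    finally show ?thesis using ij by (intro exI[of _ ?c]) auto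
  qed
qed

theorem mainTheorem17:
  fixes scale :: "'f::field \<Rightarrow> 'v::ab_group_add \<Rightarrow> 'v"
    and T T1 :: "'v \<Rightarrow> 'v" and p :: "'f poly" and m k l :: nat
  assumes "vector_space scale"
    and "vanishing_poly scale T p" and "degree p = m"
    and "l \<ge> 1" and "T1 ^^ l = T ^^ k"
  shows "\<exists>q. vanishing_poly scale T1 q \<and> degree q \<le> m * l"
proof -
  note vs = assms(1)
  interpret V: vector_space scale by (rule vs)
  have p0: "p \<noteq> 0" and z: "\<And>v. poly_apply scale p T v = 0"
    using assms(2) by (auto simp: vanishing_poly_def)
  define r where "r i = monom 1 (k * i) mod p" for i
  have "coeff (r i) j = 0" if "j \<ge> m" for i j
  proof (cases "r i = 0")
    case False
    have "degree (r i) < degree p" unfolding r_def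
      using degree_mod_less'[OF p0] False r_def by auto
    then show ?thesis using that assms(3) by (intro coeff_eq_0) auto
  qed simp
  then obtain c where c: "\<exists>i\<le>m. c i \<noteq> 0" "(\<Sum>i\<le>m. smult (c i) (r i)) = 0"
    using lin_dep[of m r] by blast
  define q where "q = (\<Sum>i\<le>m. monom (c i) (l * i))"
  have cq: "coeff q j = (\<Sum>i\<le>m. if l * i = j then c i else 0)" for j
    by (simp add: q_def coeff_sum coeff_monom)
  from c(1) obtain i0 where i0: "i0 \<le> m" "c i0 \<noteq> 0" by auto
  have "coeff q (l * i0) = (\<Sum>i\<le>m. if i = i0 then c i else 0)"
    unfolding cq using assms(4) by (intro sum.cong) auto
  also have "\<dots> = c i0" using i0 by simp
  finally have "q \<noteq> 0" using i0 by auto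
  moreover have "degree q \<le> m * l"
  proof (rule degree_le, intro allI impI)
    fix j assume j: "m * l < j"
    have "l * i < j" if "i \<le> m" for i
    proof -
      have "l * i \<le> l * m" using that by (rule mult_le_mono2)
      then show ?thesis using j mult.commute[of m l] by linarith
    qed
    then have "i * l \<noteq> j" if "i \<le> m" for i using that by (metis mult.commute less_irrefl)
    then show "coeff q j = 0" unfolding cq by (intro sum.neutral) (auto simp: mult.commute)
  qed
  moreover have "poly_apply scale q T1 v = 0" for v
  proof -
    have pw: "(T1 ^^ (l * i)) = (T ^^ (k * i))" for i
      by (metis assms(5) funpow_mult)
    have "poly_apply scale q T1 v = (\<Sum>i\<le>m. poly_apply scale (monom (c i) (l * i)) T1 v)"
      unfolding q_def by (rule pa_sum[OF vs]) simp
    also have "\<dots> = (\<Sum>i\<le>m. scale (c i) ((T ^^ (k * i)) v))"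
    proof (rule sum.cong)
      fix i
      have "monom (c i) (l * i) = smult (c i) (monom 1 (l * i))" by (simp add: smult_monom)
      then show "poly_apply scale (monom (c i) (l * i)) T1 v = scale (c i) ((T ^^ (k * i)) v)"
        by (simp only: pa_smult[OF vs] pa_monom[OF vs] pw)
    qed simp
    also have "\<dots> = (\<Sum>i\<le>m. scale (c i) (poly_apply scale (r i) T v))"
      by (simp add: r_def pa_mod[OF vs z] pa_monom[OF vs])
    also have "\<dots> = poly_apply scale (\<Sum>i\<le>m. smult (c i) (r i)) T v"
      by (simp add: pa_sum[OF vs] pa_smult[OF vs])
    also have "\<dots> = 0" using c(2) pa_zero'[OF vs] by simp
    finally show ?thesis .
  qed
  ultimately show ?thesis unfolding vanishing_poly_def by blast
qed

end
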